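(* Consider the amortized variant of the algorithmic framework described below with parameters $\gamma\in(0,1)$, $\eta=\gamma^{-1}$ and $\xi=\gamma^{-1}+\tfrac13$. Then the framework maintains $\ell_i\le(1+\eta)T$ for every machine $i$, where $\ell_i=\sum_{j\in \hat J_i\cup\check J_i}p_j/s_i$ is the total load of machine $i$ and $T$ is the current guess.
   Context: Problem: machines $1,\dots,m$ with speeds $s_1\ge s_2\ge\dots\ge s_m>0$; jobs arrive online, job $j$ has size $p_j>0$; the load of job $j$ on machine $i$ is $p_j/s_i$. Framework (amortized variant): it keeps a guess $T$, for each machine $i$ a partition of its jobs into old jobs $\hat J_i$ and new jobs $\check J_i$, and a potential $\pi_i$ per machine. Machine $i$ is saturated if $\check\ell_i:=\sum_{j\in\check J_i}p_j/s_i\ge T$, and $\eta$-eligible for job $j$ if $p_j/s_i\le \eta T$. Let $\tilde{\mathcal M}(\eta,j)$ be the set of machines that are $\eta$-eligible for $j$ and not saturated. When the first job $j_1$ arrives, set $T=p_{j_1}/s_1$ and place $j_1$ on machine 1. When a later job $j^*$ arrives, put it into a priority queue $Q$ (larger size = higher priority) and run: while $Q$ is nonempty, remove the largest job $j'$ from $Q$; then repeat: if $\tilde{\mathcal M}(\eta,j')\ne\emptyset$, choose a slowest machine $i'$ in it, move every $j\in\hat J_{i'}$ with $p_j\ge \eta^{-1}p_{j'}$ from $\hat J_{i'}$ to $\check J_{i'}$, and if $i'$ is still not saturated stop repeating; otherwise set $T:=\xi T$ and for every machine $i$ move all jobs of $\check J_i$ to $\hat J_i$ and set $\pi_i=0$.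 After a machine $i'$ is found, set $\pi:=\gamma p_{j'}+\pi_{i'}$; go through the jobs $j\in\hat J_{i'}$ in non-increasing order of size and, whenever $p_j\le\pi$, set $\pi:=\pi-p_j$ and move $j$ from $\hat J_{i'}$ into $Q$ (removing it from $i'$). Finally add $j'$ to $\check J_{i'}$ and set $\pi_{i'}:=\pi$. *)

theory Defs
  imports Main "HOL.Real"
begin

(* Jobs are identified by natural numbers (sizes given by p :: nat => real),
   machines by 1..m (speeds s :: nat => real). *)

datatype mode = Idle | Search nat

record cfg =
  Tg      :: real               (* current guess T *)
  hatJ    :: "nat \<Rightarrow> nat set"   (* old jobs of each machine *)
  chkJ    :: "nat \<Rightarrow> nat set"   (* new jobs of each machine *)
  pot     :: "nat \<Rightarrow> real"
  queue   :: "nat set"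
  mode    :: mode               (* Idle: between iterations of the while loop;
                                   Search j: job j removed from Q, in the repeat loop *)
  pending :: "nat list"         (* jobs that have not arrived yet *)

definition new_load :: "(nat \<Rightarrow> real) \<Rightarrow> (nat \<Rightarrow> real) \<Rightarrow> cfg \<Rightarrow> nat \<Rightarrow> real" where
  "new_load s p c i = (\<Sum>j\<in>chkJ c i. p j) / s i"

definition load :: "(nat \<Rightarrow> real) \<Rightarrow> (nat \<Rightarrow> real) \<Rightarrow> cfg \<Rightarrow> nat \<Rightarrow> real" where
  "load s p c i = (\<Sum>j\<in>hatJ c i \<union> chkJ c i. p j) / s i"

definition saturated :: "(nat \<Rightarrow> real) \<Rightarrow> (nat \<Rightarrow> real) \<Rightarrow> cfg \<Rightarrow> nat \<Rightarrow> bool" where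
  "saturated s p c i \<longleftrightarrow> new_load s p c i \<ge> Tg c"

definition eligible :: "real \<Rightarrow> (nat \<Rightarrow> real) \<Rightarrow> (nat \<Rightarrow> real) \<Rightarrow> cfg \<Rightarrow> nat \<Rightarrow> nat \<Rightarrow> bool" where
  "eligible \<eta> s p c j i \<longleftrightarrow> p j / s i \<le> \<eta> * Tg c"

definition Mt :: "nat \<Rightarrow> real \<Rightarrow> (nat \<Rightarrow> real) \<Rightarrow> (nat \<Rightarrow> real) \<Rightarrow> cfg \<Rightarrow> nat \<Rightarrow> nat set" where
  "Mt m \<eta> s p c j = {i \<in> {1..m}. eligible \<eta> s p c j i \<and> \<not> saturated s p c i}"

fun greedy :: "(nat \<Rightarrow> real) \<Rightarrow> real \<Rightarrow> nat list \<Rightarrow> nat set \<times> real" where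
  "greedy p \<pi> [] = ({}, \<pi>)"
| "greedy p \<pi> (j # js) =
     (if p j \<le> \<pi> then (let (R, \<pi>') = greedy p (\<pi> - p j) js in (insert j R, \<pi>'))
      else greedy p \<pi> js)"

definition promote :: "real \<Rightarrow> (nat \<Rightarrow> real) \<Rightarrow> cfg \<Rightarrow> nat \<Rightarrow> nat \<Rightarrow> cfg" where
  "promote \<eta> p c i j' =
     (let B = {j \<in> hatJ c i. p j \<ge> p j' / \<eta>}
      in c\<lparr>hatJ := (hatJ c)(i := hatJ c i - B), chkJ := (chkJ c)(i := chkJ c i \<union> B)\<rparr>)"

(* one step of the amortized framework, parameters eta = 1/gamma, xi = 1/gamma + 1/3 *)
inductive step :: "nat \<Rightarrow> (nat \<Rightarrow> real) \<Rightarrow> (nat \<Rightarrow> real) \<Rightarrow> real \<Rightarrow> cfg \<Rightarrow> cfg \<Rightarrow> bool"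
  for m :: nat and s :: "nat \<Rightarrow> real" and p :: "nat \<Rightarrow> real" and \<gamma> :: real where
  arrive: "\<lbrakk> mode c = Idle; queue c = {}; pending c = j # rest \<rbrakk> \<Longrightarrow>
     step m s p \<gamma> c (c\<lparr>queue := {j}, pending := rest\<rparr>)"
| pop: "\<lbrakk> mode c = Idle; j \<in> queue c; \<forall>k\<in>queue c. p k \<le> p j \<rbrakk> \<Longrightarrow>
     step m s p \<gamma> c (c\<lparr>queue := queue c - {j}, mode := Search j\<rparr>)"
| fail: "\<lbrakk> mode c = Search j; Mt m (1/\<gamma>) s p c j = {} \<rbrakk> \<Longrightarrow>
     step m s p \<gamma> c (c\<lparr>Tg := (1/\<gamma> + 1/3) * Tg c,
                         hatJ := (\<lambda>i. hatJ c i \<union> chkJ c i),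
                         chkJ := (\<lambda>i. {}), pot := (\<lambda>i. 0)\<rparr>)"
| fit_sat: "\<lbrakk> mode c = Search j; i \<in> Mt m (1/\<gamma>) s p c j;
              \<forall>k\<in>Mt m (1/\<gamma>) s p c j. s i \<le> s k;
              c' = promote (1/\<gamma>) p c i j; saturated s p c' i \<rbrakk> \<Longrightarrow>
     step m s p \<gamma> c c'"
| fit_assign: "\<lbrakk> mode c = Search j; i \<in> Mt m (1/\<gamma>) s p c j;
              \<forall>k\<in>Mt m (1/\<gamma>) s p c j. s i \<le> s k;
              c' = promote (1/\<gamma>) p c i j; \<not> saturated s p c' i;
              set xs = hatJ c' i; distinct xs; sorted_wrt (\<lambda>a b. p a \<ge> p b) xs;
              greedy p (\<gamma> * p j + pot c' i) xs = (R, \<pi>) \<rbrakk> \<Longrightarrow>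
     step m s p \<gamma> c (c'\<lparr>hatJ := (hatJ c')(i := hatJ c' i - R),
                         chkJ := (chkJ c')(i := chkJ c' i \<union> {j}),
                         pot := (pot c')(i := \<pi>),
                         queue := queue c' \<union> R,
                         mode := Idle\<rparr>)"

definition init_cfg :: "(nat \<Rightarrow> real) \<Rightarrow> (nat \<Rightarrow> real) \<Rightarrow> nat \<Rightarrow> nat list \<Rightarrow> cfg" where
  "init_cfg s p j1 rest =
     \<lparr>Tg = p j1 / s 1, hatJ = (\<lambda>i. {}), chkJ = (\<lambda>i. {})(1 := {j1}),
      pot = (\<lambda>i. 0), queue = {}, mode = Idle, pending = rest\<rparr>"

definition reachable :: "nat \<Rightarrow> (nat \<Rightarrow> real) \<Rightarrow> (nat \<Rightarrow> real) \<Rightarrow> real \<Rightarrow> nat list \<Rightarrow> cfg \<Rightarrow> bool" where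
  "reachable m s p \<gamma> js c \<longleftrightarrow>
     js \<noteq> [] \<and> (step m s p \<gamma>)\<^sup>*\<^sup>* (init_cfg s p (hd js) (tl js)) c"

end

theory Submission
  imports Defs
begin

lemma greedy_T: "p j \<le> b \<Longrightarrow> greedy p (b - p j) js = (R, q) \<Longrightarrow> greedy p b (j # js) = (insert j R, q)"
  by simp

lemma greedy_F: "\<not> p j \<le> b \<Longrightarrow> greedy p b (j # js) = greedy p b js"
  by simp

lemma greedy_basic:
  assumes "distinct xs"
  shows "fst (greedy p b xs) \<subseteq> set xs \<and> snd (greedy p b xs) = b - sum p (fst (greedy p b xs))"
  using assms
proof (induction xs arbitrary: b)
  case Nil then show ?case by simp
next
  case (Cons j js)
  show ?case
  proof (cases "p j \<le> b")
    case True
    obtain R q where g: "greedy p (b - p j) js = (R, q)" by (cases "greedy p (b - p j) js")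
    have ih: "R \<subseteq> set js" "q = (b - p j) - sum p R" using Cons.IH[of "b - p j"] Cons.prems g by auto
    have jR: "j \<notin> R" using Cons.prems ih(1) by auto
    have fR: "finite R" using ih(1) finite_subset by blast
    have s: "sum p (insert j R) = p j + sum p R" using jR fR by simp
    show ?thesis unfolding greedy_T[OF True g] fst_conv snd_conv s using ih by auto
  next
    case False
    have "distinct js" using Cons.prems by simp
    then show ?thesis unfolding greedy_F[of p j b js, OF False] using Cons.IH[of b] by auto
  qed
qed

lemma greedy_le:
  assumes "\<forall>x\<in>set xs. 0 \<le> p x"
  shows "snd (greedy p b xs) \<le> b"
  using assms
proof (induction xs arbitrary: b)
  case Nil then show ?case by simp
next
  case (Cons j js)
  have pj: "0 \<le> p j" and ps: "\<forall>x\<in>set js. 0 \<le> p x" using Cons.prems by auto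
  show ?case
  proof (cases "p j \<le> b")
    case True
    obtain R q where g: "greedy p (b - p j) js = (R, q)" by (cases "greedy p (b - p j) js")
    have "q \<le> b - p j" using Cons.IH[OF ps, of "b - p j"] g by simp
    then show ?thesis unfolding greedy_T[OF True g] using pj by simp
  next
    case False
    show ?thesis unfolding greedy_F[of p j b js, OF False] using Cons.IH[OF ps, of b] .
  qed
qed

lemma greedy_nonneg:
  assumes "0 \<le> b"
  shows "0 \<le> snd (greedy p b xs)"
  using assms
proof (induction xs arbitrary: b)
  case Nil then show ?case by simp
next
  case (Cons j js)
  show ?case
  proof (cases "p j \<le> b")
    case True
    obtain R q where g: "greedy p (b - p j) js = (R, q)" by (cases "greedy p (b - p j) js")
    have "0 \<le> b - p j" using True by simp
    then have "0 \<le> q" using Cons.IH[of "b - p j"] g by simp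
    then show ?thesis unfolding greedy_T[OF True g] by simp
  next
    case False
    show ?thesis unfolding greedy_F[of p j b js, OF False] using Cons.IH[of b] Cons.prems .
  qed
qed

lemma greedy_skip:
  assumes "\<forall>x\<in>set xs. 0 \<le> p x" "x \<in> set xs" "x \<notin> fst (greedy p b xs)"
  shows "snd (greedy p b xs) < p x"
  using assms
proof (induction xs arbitrary: b)
  case Nil then show ?case by simp
next
  case (Cons j js)
  have ps: "\<forall>x\<in>set js. 0 \<le> p x" using Cons.prems by auto
  show ?case
  proof (cases "p j \<le> b")
    case True
    obtain R q where g: "greedy p (b - p j) js = (R, q)" by (cases "greedy p (b - p j) js")
    have G: "greedy p b (j # js) = (insert j R, q)" using greedy_T[OF True g] .
    have xj: "x \<noteq> j" using Cons.prems(3) unfolding G by auto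
    have xjs: "x \<in> set js" using Cons.prems(2) xj by simp
    have xR: "x \<notin> fst (greedy p (b - p j) js)" using Cons.prems(3) unfolding G g by simp
    have "snd (greedy p (b - p j) js) < p x" using Cons.IH[OF ps xjs xR] .
    then show ?thesis unfolding G using g by simp
  next
    case False
    have G: "greedy p b (j # js) = greedy p b js" using greedy_F[of p j b js, OF False] .
    show ?thesis
    proof (cases "x = j")
      case True
      have "snd (greedy p b js) \<le> b" using greedy_le[OF ps] .
      then show ?thesis unfolding G using False True by simp
    next
      case F2: False
      have xjs: "x \<in> set js" using Cons.prems(2) F2 by simp
      have xR: "x \<notin> fst (greedy p b js)" using Cons.prems(3) unfolding G .
      show ?thesis unfolding G using Cons.IH[OF ps xjs xR] .
    qed
  qed
qed

lemma greedy_hd: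
  assumes "distinct xs" "\<forall>x\<in>set xs. 0 \<le> p x" "sorted_wrt (\<lambda>a b. p a \<ge> p b) xs"
    "\<forall>x\<in>set xs. p x \<le> b" "u \<in> set xs"
  shows "p u \<le> sum p (fst (greedy p b xs))"
proof -
  obtain x0 ys where xs: "xs = x0 # ys" using assms(5) by (cases xs) auto
  have pu: "p u \<le> p x0" using assms(3,5) xs by auto
  have px0: "p x0 \<le> b" using assms(4) xs by simp
  obtain R q where g: "greedy p (b - p x0) ys = (R, q)" by (cases "greedy p (b - p x0) ys")
  have R: "fst (greedy p b xs) = insert x0 R" unfolding xs greedy_T[OF px0 g] by simp
  have "R \<subseteq> set ys" using greedy_basic[of ys p "b - p x0"] assms(1) xs g by auto
  then have fin: "finite (insert x0 R)" using finite_subset by blast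
  have "p x0 \<le> sum p (insert x0 R)"
    using fin assms(2) xs \<open>R \<subseteq> set ys\<close>
    by (intro member_le_sum) auto
  then show ?thesis using R pu by simp
qed

lemma num_bound:
  fixes \<gamma> \<eta> X C Ov N A \<pi> u :: real and k :: nat
  assumes g0: "0 < \<gamma>" and g1: "\<gamma> < 1" and ge: "\<gamma> * \<eta> = 1" and X0: "0 < X"
    and C: "C * (\<eta> + 1/3) = (1 + \<eta>) * X"
    and I1: "Ov + N - (1 - \<gamma>) * A - \<pi> \<le> C" and I2: "0 \<le> A" and I3: "A \<le> N" and I4: "0 \<le> \<pi>"
    and U1: "\<pi> < u" and U2: "u \<le> Ov" and U3: "real k * u \<le> \<gamma> * A - \<pi>" and K1: "1 \<le> k"
    and K2: "k = 1 \<longrightarrow> A \<le> \<eta> * X"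
  shows "Ov + N \<le> (1 + \<eta>) * X"
proof -
  have etaeq: "\<eta> = 1 / \<gamma>" using g0 ge by (simp add: field_simps)
  have eta1: "\<eta> > 1" unfolding etaeq using g0 g1 by simp
  have e1: "(1 - \<gamma>) * A = A - \<gamma> * A" by (simp add: algebra_simps)
  have W: "Ov + N \<le> C + (1 - \<gamma>) * A + \<pi>" using I1 by linarith
  have e2: "(1 + \<eta>) * X = X + \<eta> * X" by (simp add: algebra_simps)
  show ?thesis
  proof (cases "k = 1")
    case True
    then have "real k * u = u" by simp
    then have p2: "2 * \<pi> < \<gamma> * A" using U1 U3 by linarith
    have e3: "(1 - \<gamma>/2) * A = A - \<gamma> * A / 2" by (simp add: algebra_simps)
    have "(1 - \<gamma>) * A + \<pi> \<le> (1 - \<gamma>/2) * A" unfolding e1 e3 using p2 by linarith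
    also have "\<dots> \<le> (1 - \<gamma>/2) * (\<eta> * X)" using True K2 g1 by (intro mult_left_mono) auto
    also have "\<dots> = \<eta> * X - (\<gamma> * \<eta>) * X / 2" by (simp add: algebra_simps)
    also have "\<dots> = \<eta> * X - X / 2" unfolding ge by simp
    finally have a: "(1 - \<gamma>) * A + \<pi> \<le> \<eta> * X - X / 2" .
    have n: "0 \<le> (\<eta> - 1) * X" using eta1 X0 by simp
    have e4: "(3/2 * X) * (\<eta> + 1/3) = (1 + \<eta>) * X + (\<eta> - 1) * X / 2" by (simp add: field_simps)
    have "C * (\<eta> + 1/3) \<le> (3/2 * X) * (\<eta> + 1/3)" unfolding C e4 using n by linarith
    then have "C \<le> 3/2 * X" using eta1 mult_right_le_imp_le[of C "\<eta> + 1/3" "3/2 * X"] by simp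
    then show ?thesis using W a e2 by linarith
  next
    case False
    then have "2 \<le> real k" using K1 by simp
    moreover have "0 \<le> u" using U1 I4 by linarith
    ultimately have "2 * u \<le> real k * u" by (intro mult_right_mono)
    then have "2 * u \<le> \<gamma> * A - \<pi>" using U3 by linarith
    then have p3: "3 * \<pi> < \<gamma> * A" using U1 by linarith
    have gA: "\<gamma> * A < C" using I1 I3 U1 U2 e1 by linarith
    have e5: "(1 - 2 * \<gamma> / 3) * A = A - 2 * (\<gamma> * A) / 3" by (simp add: algebra_simps)
    have "(1 - \<gamma>) * A + \<pi> \<le> (1 - 2 * \<gamma> / 3) * A" unfolding e1 e5 using p3 by linarith
    also have "\<dots> = (\<gamma> * \<eta>) * A - 2 * (\<gamma> * A) / 3" unfolding e5 ge by simp
    also have "\<dots> = (\<eta> - 2/3) * (\<gamma> * A)" by (simp add: algebra_simps)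
    also have "\<dots> \<le> (\<eta> - 2/3) * C" using gA eta1 by (intro mult_left_mono) auto
    finally have b: "(1 - \<gamma>) * A + \<pi> \<le> (\<eta> - 2/3) * C" .
    have e6: "C + (\<eta> - 2/3) * C = C * (\<eta> + 1/3)" by (simp add: algebra_simps)
    show ?thesis using W b e6 C by linarith
  qed
qed

definition minv :: "real \<Rightarrow> (nat \<Rightarrow> real) \<Rightarrow> real \<Rightarrow> real \<Rightarrow> nat set \<Rightarrow> nat set \<Rightarrow> real \<Rightarrow> bool" where
  "minv \<gamma> p si T H K \<pi> \<longleftrightarrow>
     0 \<le> \<pi> \<and> sum p H + sum p K \<le> (1 + 1/\<gamma>) * T * si \<and> (\<forall>u\<in>H. \<pi> < p u) \<and>
     (\<exists>A k. 0 \<le> A \<and> A \<le> sum p K \<and>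
        sum p H + sum p K - (1 - \<gamma>) * A - \<pi> \<le> (1 + 1/\<gamma>) * T * si / (1/\<gamma> + 1/3) \<and>
        (\<forall>u\<in>H. real k * p u \<le> \<gamma> * A - \<pi>) \<and> (k = 0 \<longrightarrow> A = 0) \<and>
        (k = 1 \<longrightarrow> A \<le> (1/\<gamma>) * T * si))"

lemma minv_promote:
  assumes "minv \<gamma> p si T H K \<pi>" "finite H" "finite K" "H \<inter> K = {}" "B \<subseteq> H" "\<forall>x\<in>H. 0 < p x"
  shows "minv \<gamma> p si T (H - B) (K \<union> B) \<pi>"
proof -
  have fB: "finite B" using assms finite_subset by blast
  have e1: "sum p (H - B) = sum p H - sum p B" using assms fB by (simp add: sum_diff)
  have e2: "sum p (K \<union> B) = sum p K + sum p B" using assms fB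
    by (subst sum.union_disjoint) auto
  have nn: "0 \<le> sum p B" using assms by (intro sum_nonneg) (auto intro: less_imp_le)
  from assms(1) obtain A k where Ak: "0 \<le> A" "A \<le> sum p K"
     "sum p H + sum p K - (1 - \<gamma>) * A - \<pi> \<le> (1 + 1/\<gamma>) * T * si / (1/\<gamma> + 1/3)"
     "\<forall>u\<in>H. real k * p u \<le> \<gamma> * A - \<pi>" "k = 0 \<longrightarrow> A = 0" "k = 1 \<longrightarrow> A \<le> (1/\<gamma>) * T * si"
    unfolding minv_def by blast
  show ?thesis unfolding minv_def e1 e2
    using assms(1) Ak nn unfolding minv_def
    by (intro conjI exI[of _ A] exI[of _ k]) auto
qed

lemma minv_fail:
  assumes "sum p H + sum p K \<le> (1 + 1/\<gamma>) * T * si" "finite H" "finite K" "H \<inter> K = {}"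
    "\<forall>x\<in>H \<union> K. 0 < p x" "0 < \<gamma>" "\<gamma> < 1" "0 < T" "0 < si"
  shows "minv \<gamma> p si ((1/\<gamma> + 1/3) * T) (H \<union> K) {} 0"
proof -
  have e: "sum p (H \<union> K) = sum p H + sum p K" using assms by (simp add: sum.union_disjoint)
  have x: "(1/\<gamma> + 1/3) > 0" using assms by (simp add: add_pos_pos)
  have F1: "(1 + 1/\<gamma>) * ((1/\<gamma> + 1/3) * T) * si / (1/\<gamma> + 1/3) = (1 + 1/\<gamma>) * T * si"
    using x by (simp add: field_simps)
  have g1: "1 < 1/\<gamma>" using assms by simp
  moreover have "(1 + 1/\<gamma>) * T * si * 1 \<le> (1 + 1/\<gamma>) * T * si * (1/\<gamma> + 1/3)"
  proof (rule mult_left_mono)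
    show "1 \<le> 1/\<gamma> + 1/3" using g1 by linarith
    show "0 \<le> (1 + 1/\<gamma>) * T * si" using g1 assms by (intro mult_nonneg_nonneg) auto
  qed
  moreover have "(1 + 1/\<gamma>) * ((1/\<gamma> + 1/3) * T) * si = (1 + 1/\<gamma>) * T * si * (1/\<gamma> + 1/3)"
    by (simp add: ac_simps)
  ultimately have F2: "(1 + 1/\<gamma>) * T * si \<le> (1 + 1/\<gamma>) * ((1/\<gamma> + 1/3) * T) * si"
    by linarith
  show ?thesis unfolding minv_def e using assms F1 F2
    by (intro conjI exI[of _ 0] exI[of _ "0::nat"]) auto
qed

lemma minv_assign:
  assumes mi: "minv \<gamma> p si T H K \<pi>" and fin: "finite H" "finite K" and dj: "H \<inter> K = {}"
    and jn: "j \<notin> H \<union> K" and pj: "0 < p j" "p j \<le> (1/\<gamma>) * T * si"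
    and ns: "sum p K < T * si" and small: "\<forall>x\<in>H. p x < \<gamma> * p j" and pos: "\<forall>x\<in>H. 0 < p x"
    and xs: "set xs = H" "distinct xs" "sorted_wrt (\<lambda>a b. p a \<ge> p b) xs"
    and g: "greedy p (\<gamma> * p j + \<pi>) xs = (R, \<pi>')"
    and ga: "0 < \<gamma>" "\<gamma> < 1" and TS: "0 < T * si"
  shows "minv \<gamma> p si T (H - R) (K \<union> {j}) \<pi>'"
proof -
  from mi obtain A k where Ak: "0 \<le> A" "A \<le> sum p K"
     "sum p H + sum p K - (1 - \<gamma>) * A - \<pi> \<le> (1 + 1/\<gamma>) * T * si / (1/\<gamma> + 1/3)"
     "\<forall>u\<in>H. real k * p u \<le> \<gamma> * A - \<pi>" "k = 0 \<longrightarrow> A = 0" "k = 1 \<longrightarrow> A \<le> (1/\<gamma>) * T * si"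
    and pi0: "0 \<le> \<pi>" and piu: "\<forall>u\<in>H. \<pi> < p u"
    unfolding minv_def by blast
  have gb: "R \<subseteq> H" "\<pi>' = \<gamma> * p j + \<pi> - sum p R"
    using greedy_basic[of xs p "\<gamma> * p j + \<pi>"] xs g by auto
  have fR: "finite R" using gb fin finite_subset by blast
  have e1: "sum p (H - R) = sum p H - sum p R" using gb fR fin by (simp add: sum_diff)
  have e2: "sum p (K \<union> {j}) = sum p K + p j" using jn fin by simp
  have pi'0: "0 \<le> \<pi>'" using greedy_nonneg[of "\<gamma> * p j + \<pi>" p xs] g pi0 ga pj
    by (simp add: less_imp_le)
  have nonneg: "\<forall>x\<in>set xs. 0 \<le> p x" using pos xs by (auto intro: less_imp_le)
  have skip: "\<forall>u\<in>H - R. \<pi>' < p u"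
    using greedy_skip[of xs p] nonneg g xs by (metis DiffD1 DiffD2 fst_conv snd_conv)
  have hd: "\<forall>u\<in>H. p u \<le> sum p R"
  proof
    fix u assume u: "u \<in> H"
    have "\<forall>x\<in>set xs. p x \<le> \<gamma> * p j + \<pi>" using small pi0 xs by force
    then show "p u \<le> sum p R" using greedy_hd[of xs p "\<gamma> * p j + \<pi>" u] xs nonneg g u by auto
  qed
  let ?A = "A + p j" and ?k = "Suc k"
  have inv3: "sum p (H - R) + sum p (K \<union> {j}) - (1 - \<gamma>) * ?A - \<pi>' \<le> (1 + 1/\<gamma>) * T * si / (1/\<gamma> + 1/3)"
    using Ak(3) unfolding e1 e2 gb(2) by (simp add: algebra_simps)
  have kk: "\<forall>u\<in>H - R. real ?k * p u \<le> \<gamma> * ?A - \<pi>'"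
  proof
    fix u assume u: "u \<in> H - R"
    have "real k * p u \<le> \<gamma> * A - \<pi>" using Ak(4) u by auto
    moreover have "p u \<le> sum p R" using hd u by auto
    ultimately show "real ?k * p u \<le> \<gamma> * ?A - \<pi>'" unfolding gb(2) by (simp add: algebra_simps)
  qed
  have k1: "?k = 1 \<longrightarrow> ?A \<le> (1/\<gamma>) * T * si" using Ak(5) pj by auto
  have W: "sum p (H - R) + sum p (K \<union> {j}) \<le> (1 + 1/\<gamma>) * T * si"
  proof (cases "H - R = {}")
    case True
    then have "sum p (H - R) = 0" by (simp only: sum.empty)
    then show ?thesis unfolding e2 using ns pj by (simp add: algebra_simps)
  next
    case False
    then obtain u where u: "u \<in> H - R" by blast
    have uO: "p u \<le> sum p (H - R)" using u fin pos
      by (intro member_le_sum) (auto intro: less_imp_le)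
    have C: "(1 + 1/\<gamma>) * T * si / (1/\<gamma> + 1/3) * (1/\<gamma> + 1/3) = (1 + 1/\<gamma>) * (T * si)"
    proof -
      have "0 < 1/\<gamma>" using ga by simp
      then have xi: "1/\<gamma> + 1/3 \<noteq> 0" by linarith
      show ?thesis using xi by simp
    qed
    have "sum p (H - R) + sum p (K \<union> {j}) \<le> (1 + 1/\<gamma>) * (T * si)"
      using num_bound[of \<gamma> "1/\<gamma>" "T * si" "(1 + 1/\<gamma>) * T * si / (1/\<gamma> + 1/3)" "sum p (H - R)"
          "sum p (K \<union> {j})" ?A \<pi>' "p u" ?k]
        ga TS C inv3 Ak(1) pj e2 Ak(2) pi'0 skip u uO kk k1 by auto
    then show ?thesis by (simp add: algebra_simps)
  qed
  show ?thesis unfolding minv_def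
    using pi'0 W skip inv3 kk k1 Ak(1,2) pj e2
    by (intro conjI exI[of _ ?A] exI[of _ ?k]) auto
qed

definition ginv :: "nat \<Rightarrow> (nat \<Rightarrow> real) \<Rightarrow> (nat \<Rightarrow> real) \<Rightarrow> real \<Rightarrow> nat list \<Rightarrow> cfg \<Rightarrow> bool" where
"ginv m s p \<gamma> js c \<longleftrightarrow>
  0 < Tg c \<and> (\<forall>i. hatJ c i \<subseteq> set js) \<and> (\<forall>i. chkJ c i \<subseteq> set js) \<and>
    (\<forall>i. hatJ c i \<inter> chkJ c i = {}) \<and> (\<forall>i. queue c \<inter> (hatJ c i \<union> chkJ c i) = {}) \<and>
    (\<forall>i. set (pending c) \<inter> (hatJ c i \<union> chkJ c i) = {}) \<and>
    (\<forall>i i2. i \<noteq> i2 \<longrightarrow> (hatJ c i \<union> chkJ c i) \<inter> (hatJ c i2 \<union> chkJ c i2) = {}) \<and>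
    queue c \<subseteq> set js \<and> set (pending c) \<subseteq> set js \<and> distinct (pending c) \<and> set (pending c) \<inter> queue c = {} \<and>
    (\<forall>j. mode c = Search j \<longrightarrow> j \<in> set js \<and> j \<notin> queue c \<and> j \<notin> set (pending c) \<and>
       (\<forall>i. j \<notin> hatJ c i \<union> chkJ c i)) \<and>
    (\<forall>i\<in>{1..m}. minv \<gamma> p (s i) (Tg c) (hatJ c i) (chkJ c i) (pot c i))"

lemma promote_sel:
  "Tg (promote e p c i j) = Tg c"
  "pot (promote e p c i j) = pot c"
  "queue (promote e p c i j) = queue c"
  "mode (promote e p c i j) = mode c"
  "pending (promote e p c i j) = pending c"
  "hatJ (promote e p c i j) = (hatJ c)(i := hatJ c i - {x \<in> hatJ c i. p j / e \<le> p x})"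
  "chkJ (promote e p c i j) = (chkJ c)(i := chkJ c i \<union> {x \<in> hatJ c i. p j / e \<le> p x})"
  unfolding promote_def Let_def by simp_all

lemma minv_W:
  "minv \<gamma> p si T H K \<pi> \<Longrightarrow> sum p H + sum p K \<le> (1 + 1/\<gamma>) * T * si"
  unfolding minv_def by blast

lemma ginv_init:
  assumes "0 < \<gamma>" "\<gamma> < 1" "1 \<le> m" "\<forall>i\<in>{1..m}. 0 < s i"
    and "distinct js" "\<forall>j\<in>set js. 0 < p j" "js \<noteq> []"
  shows "ginv m s p \<gamma> js (init_cfg s p (hd js) (tl js))"
proof -
  obtain j1 rest where js: "js = j1 # rest" using assms by (cases js) auto
  have s1: "0 < s 1" using assms by auto
  have p1: "0 < p j1" using assms js by auto
  have T2: "(1 + 1/\<gamma>) * (p j1 / s 1) * s 1 = (1 + 1/\<gamma>) * p j1" using s1 by simp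
  have T3: "1/\<gamma> * (p j1 / s 1) * s 1 = 1/\<gamma> * p j1" using s1 by simp
  have m1: "minv \<gamma> p (s 1) (p j1 / s 1) {} {j1} 0"
  proof -
    have e: "\<gamma> * (1/\<gamma> + 1/3) = 1 + \<gamma>/3" using assms(1) by (simp add: algebra_simps)
    have g1: "1 < 1/\<gamma>" using assms(1,2) by simp
    have g: "\<gamma> * (1/\<gamma> + 1/3) \<le> 1 + 1/\<gamma>" unfolding e using g1 assms(2) by linarith
    have xi: "0 < 1/\<gamma> + 1/3" using g1 by linarith
    have a: "\<gamma> * p j1 \<le> (1 + 1/\<gamma>) * p j1 / (1/\<gamma> + 1/3)"
    proof -
      have "\<gamma> * (1/\<gamma> + 1/3) * p j1 \<le> (1 + 1/\<gamma>) * p j1" using g p1 by (intro mult_right_mono) auto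
      then have "\<gamma> * p j1 * (1/\<gamma> + 1/3) \<le> (1 + 1/\<gamma>) * p j1" by (simp add: ac_simps)
      then show ?thesis using xi by (simp add: pos_le_divide_eq)
    qed
    have b: "p j1 \<le> (1 + 1/\<gamma>) * p j1" using p1 assms(1) by (simp add: algebra_simps)
    have c: "p j1 \<le> 1/\<gamma> * p j1" using p1 assms by (simp add: field_simps)
    show ?thesis unfolding minv_def T2 T3 using a b c p1
      by (intro conjI exI[of _ "p j1"] exI[of _ "1::nat"]) (simp_all add: algebra_simps)
  qed
  have m0: "minv \<gamma> p si T {} {} 0" if "0 < T" "0 < si" for si T
  proof -
    have "0 \<le> (1 + 1/\<gamma>) * T * si / (1/\<gamma> + 1/3)" using that assms(1)
      by (intro divide_nonneg_pos mult_nonneg_nonneg) (auto simp: add_pos_pos intro: less_imp_le)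
    moreover have "0 \<le> (1 + 1/\<gamma>) * T * si" using that assms(1)
      by (intro mult_nonneg_nonneg) (auto intro: less_imp_le)
    ultimately show ?thesis unfolding minv_def
      by (intro conjI exI[of _ 0] exI[of _ "0::nat"]) auto
  qed
  have T0: "0 < p j1 / s 1" using s1 p1 by simp
  show ?thesis unfolding ginv_def init_cfg_def using js assms T0 m1 m0
    by (auto simp: s1)
qed

lemma ginvI:
  assumes "0 < Tg c"
    "\<forall>i. hatJ c i \<subseteq> set js"
    "\<forall>i. chkJ c i \<subseteq> set js"
    "\<forall>i. hatJ c i \<inter> chkJ c i = {}"
    "\<forall>i. queue c \<inter> (hatJ c i \<union> chkJ c i) = {}"
    "\<forall>i. set (pending c) \<inter> (hatJ c i \<union> chkJ c i) = {}"
    "\<forall>i i2. i \<noteq> i2 \<longrightarrow> (hatJ c i \<union> chkJ c i) \<inter> (hatJ c i2 \<union> chkJ c i2) = {}"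
    "queue c \<subseteq> set js"
    "set (pending c) \<subseteq> set js"
    "distinct (pending c)"
    "set (pending c) \<inter> queue c = {}"
    "\<forall>j. mode c = Search j \<longrightarrow> j \<in> set js \<and> j \<notin> queue c \<and> j \<notin> set (pending c) \<and> (\<forall>i. j \<notin> hatJ c i \<union> chkJ c i)"
    "\<forall>i\<in>{1..m}. minv \<gamma> p (s i) (Tg c) (hatJ c i) (chkJ c i) (pot c i)"
  shows "ginv m s p \<gamma> js c"
  unfolding ginv_def by (intro conjI) (fact assms)+

lemma ginvD1: "ginv m s p \<gamma> js c \<Longrightarrow> 0 < Tg c"
  unfolding ginv_def by (elim conjE) assumption

lemma ginvD2: "ginv m s p \<gamma> js c \<Longrightarrow> \<forall>i. hatJ c i \<subseteq> set js"
  unfolding ginv_def by (elim conjE) assumption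

lemma ginvD3: "ginv m s p \<gamma> js c \<Longrightarrow> \<forall>i. chkJ c i \<subseteq> set js"
  unfolding ginv_def by (elim conjE) assumption

lemma ginvD4: "ginv m s p \<gamma> js c \<Longrightarrow> \<forall>i. hatJ c i \<inter> chkJ c i = {}"
  unfolding ginv_def by (elim conjE) assumption

lemma ginvD5: "ginv m s p \<gamma> js c \<Longrightarrow> \<forall>i. queue c \<inter> (hatJ c i \<union> chkJ c i) = {}"
  unfolding ginv_def by (elim conjE) assumption

lemma ginvD6: "ginv m s p \<gamma> js c \<Longrightarrow> \<forall>i. set (pending c) \<inter> (hatJ c i \<union> chkJ c i) = {}"
  unfolding ginv_def by (elim conjE) assumption

lemma ginvD7: "ginv m s p \<gamma> js c \<Longrightarrow> \<forall>i i2. i \<noteq> i2 \<longrightarrow> (hatJ c i \<union> chkJ c i) \<inter> (hatJ c i2 \<union> chkJ c i2) = {}"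
  unfolding ginv_def by (elim conjE) assumption

lemma ginvD8: "ginv m s p \<gamma> js c \<Longrightarrow> queue c \<subseteq> set js"
  unfolding ginv_def by (elim conjE) assumption

lemma ginvD9: "ginv m s p \<gamma> js c \<Longrightarrow> set (pending c) \<subseteq> set js"
  unfolding ginv_def by (elim conjE) assumption

lemma ginvD10: "ginv m s p \<gamma> js c \<Longrightarrow> distinct (pending c)"
  unfolding ginv_def by (elim conjE) assumption

lemma ginvD11: "ginv m s p \<gamma> js c \<Longrightarrow> set (pending c) \<inter> queue c = {}"
  unfolding ginv_def by (elim conjE) assumption

lemma ginvD12: "ginv m s p \<gamma> js c \<Longrightarrow> \<forall>j. mode c = Search j \<longrightarrow> j \<in> set js \<and> j \<notin> queue c \<and> j \<notin> set (pending c) \<and> (\<forall>i. j \<notin> hatJ c i \<union> chkJ c i)"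
  unfolding ginv_def by (elim conjE) assumption

lemma ginvD13: "ginv m s p \<gamma> js c \<Longrightarrow> \<forall>i\<in>{1..m}. minv \<gamma> p (s i) (Tg c) (hatJ c i) (chkJ c i) (pot c i)"
  unfolding ginv_def by (elim conjE) assumption

lemmas ginvD = ginvD1 ginvD2 ginvD3 ginvD4 ginvD5 ginvD6 ginvD7 ginvD8 ginvD9 ginvD10 ginvD11 ginvD12 ginvD13

lemma ginv_step:
  assumes ga: "0 < \<gamma>" "\<gamma> < 1" and sp: "\<forall>i\<in>{1..m}. 0 < s i"
    and pp: "\<forall>j\<in>set js. 0 < p j"
    and st: "step m s p \<gamma> c c'" and I: "ginv m s p \<gamma> js c"
  shows "ginv m s p \<gamma> js c'"
  using st
proof cases
  case (arrive j rest)
  note G = ginvD[OF I]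
  have jn: "\<forall>i. j \<notin> hatJ c i \<union> chkJ c i" using G(6) arrive(4) by (metis disjoint_iff list.set_intros(1))
  show ?thesis unfolding arrive(1)
    apply (rule ginvI)
    using G arrive jn by simp_all
next
  case (pop j)
  note G = ginvD[OF I]
  have jn: "\<forall>i. j \<notin> hatJ c i \<union> chkJ c i" using G(5) pop(3) by blast
  have jp: "j \<notin> set (pending c)" using G(11) pop(3) by blast
  have js: "j \<in> set js" using G(8) pop(3) by blast
  have O: "Tg c' = Tg c" "hatJ c' = hatJ c" "chkJ c' = chkJ c" "pot c' = pot c"
    "queue c' = queue c - {j}" "mode c' = Search j" "pending c' = pending c"
    unfolding pop(1) by simp_all
  show ?thesis
  proof (rule ginvI)
    show "0 < Tg c'" "\<forall>k. hatJ c' k \<subseteq> set js" "\<forall>k. chkJ c' k \<subseteq> set js"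
      "\<forall>k. hatJ c' k \<inter> chkJ c' k = {}"
      "\<forall>k. set (pending c') \<inter> (hatJ c' k \<union> chkJ c' k) = {}"
      "\<forall>k k2. k \<noteq> k2 \<longrightarrow> (hatJ c' k \<union> chkJ c' k) \<inter> (hatJ c' k2 \<union> chkJ c' k2) = {}"
      "set (pending c') \<subseteq> set js" "distinct (pending c')"
      "\<forall>k\<in>{1..m}. minv \<gamma> p (s k) (Tg c') (hatJ c' k) (chkJ c' k) (pot c' k)"
      unfolding O using G(1,2,3,4,6,7,9,10,13) by simp_all
    show "\<forall>k. queue c' \<inter> (hatJ c' k \<union> chkJ c' k) = {}" unfolding O using G(5) by blast
    show "queue c' \<subseteq> set js" unfolding O using G(8) by blast
    show "set (pending c') \<inter> queue c' = {}" unfolding O using G(11) by blast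
    show "\<forall>j'. mode c' = Search j' \<longrightarrow> j' \<in> set js \<and> j' \<notin> queue c' \<and> j' \<notin> set (pending c') \<and>
       (\<forall>k. j' \<notin> hatJ c' k \<union> chkJ c' k)" unfolding O using jn jp js by simp
  qed
next
  case (fail j)
  note G = ginvD[OF I]
  have fin: "\<And>i. finite (hatJ c i)" "\<And>i. finite (chkJ c i)"
    using G(2,3) by (meson finite_set finite_subset)+
  have m: "\<forall>i\<in>{1..m}. minv \<gamma> p (s i) ((1/\<gamma> + 1/3) * Tg c) (hatJ c i \<union> chkJ c i) {} 0"
  proof
    fix i assume i: "i \<in> {1..m}"
    have mi: "minv \<gamma> p (s i) (Tg c) (hatJ c i) (chkJ c i) (pot c i)" using G(13) i by blast
    have pos: "\<forall>x\<in>hatJ c i \<union> chkJ c i. 0 < p x" using G(2,3) pp by blast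
    have dj: "hatJ c i \<inter> chkJ c i = {}" using G(4) by blast
    have si: "0 < s i" using sp i by blast
    show "minv \<gamma> p (s i) ((1/\<gamma> + 1/3) * Tg c) (hatJ c i \<union> chkJ c i) {} 0"
      using minv_fail[OF minv_W[OF mi] fin(1)[of i] fin(2)[of i] dj pos ga G(1) si] .
  qed
  have x: "0 < 1/\<gamma> + 1/3" using ga by (simp add: add_pos_pos)
  have T: "0 < (1/\<gamma> + 1/3) * Tg c" using x G(1) by simp
  show ?thesis unfolding fail(1)
    apply (rule ginvI)
    using G fail m T by simp_all
next
  case (fit_sat j i)
  note G = ginvD[OF I]
  let ?B = "{x \<in> hatJ c i. p j / (1/\<gamma>) \<le> p x}"
  have iM: "i \<in> {1..m}" using fit_sat(2) unfolding Mt_def by blast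
  have fin: "\<And>i. finite (hatJ c i)" "\<And>i. finite (chkJ c i)"
    using G(2,3) by (meson finite_set finite_subset)+
  have mi: "minv \<gamma> p (s i) (Tg c) (hatJ c i) (chkJ c i) (pot c i)" using G(13) iM by blast
  have pos: "\<forall>x\<in>hatJ c i. 0 < p x" using G(2) pp by blast
  have m': "minv \<gamma> p (s i) (Tg c) (hatJ c i - ?B) (chkJ c i \<union> ?B) (pot c i)"
  proof -
    have Bs: "?B \<subseteq> hatJ c i" by (rule Collect_restrict)
    show ?thesis using minv_promote[OF mi fin(1)[of i] fin(2)[of i] G(4)[rule_format, of i] Bs pos] .
  qed
  have H: "\<And>k. hatJ c' k = (if k = i then hatJ c i - ?B else hatJ c k)"
    and K: "\<And>k. chkJ c' k = (if k = i then chkJ c i \<union> ?B else chkJ c k)"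
    and O: "Tg c' = Tg c" "pot c' = pot c" "queue c' = queue c" "mode c' = mode c" "pending c' = pending c"
    unfolding fit_sat(4) promote_sel by simp_all
  have U: "\<And>k. hatJ c' k \<union> chkJ c' k = hatJ c k \<union> chkJ c k" unfolding H K by auto
  show ?thesis
  proof (rule ginvI)
    show "0 < Tg c'" using G(1) O by simp
    show "\<forall>k. hatJ c' k \<subseteq> set js" using G(2) H by auto
    show "\<forall>k. chkJ c' k \<subseteq> set js" using G(2,3) K by auto
    show "\<forall>k. hatJ c' k \<inter> chkJ c' k = {}" using G(4) H K by auto
    show "\<forall>k. queue c' \<inter> (hatJ c' k \<union> chkJ c' k) = {}" unfolding U O using G(5) .
    show "\<forall>k. set (pending c') \<inter> (hatJ c' k \<union> chkJ c' k) = {}" unfolding U O using G(6) .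
    show "\<forall>k k2. k \<noteq> k2 \<longrightarrow> (hatJ c' k \<union> chkJ c' k) \<inter> (hatJ c' k2 \<union> chkJ c' k2) = {}"
      unfolding U using G(7) .
    show "queue c' \<subseteq> set js" "set (pending c') \<subseteq> set js" "distinct (pending c')"
      "set (pending c') \<inter> queue c' = {}" unfolding O using G(8-11) by auto
    show "\<forall>j. mode c' = Search j \<longrightarrow> j \<in> set js \<and> j \<notin> queue c' \<and> j \<notin> set (pending c') \<and>
       (\<forall>k. j \<notin> hatJ c' k \<union> chkJ c' k)" unfolding U O using G(12) .
    show "\<forall>k\<in>{1..m}. minv \<gamma> p (s k) (Tg c') (hatJ c' k) (chkJ c' k) (pot c' k)"
      unfolding O using G(13) m' H K by auto
  qed
next
  case (fit_assign j i c1 xs R \<pi>)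
  note G = ginvD[OF I]
  let ?B = "{x \<in> hatJ c i. p j / (1/\<gamma>) \<le> p x}"
  have iM: "i \<in> {1..m}" using fit_assign(3) unfolding Mt_def by blast
  have si: "0 < s i" using sp iM by blast
  have fin: "\<And>i. finite (hatJ c i)" "\<And>i. finite (chkJ c i)"
    using G(2,3) by (meson finite_set finite_subset)+
  have mi: "minv \<gamma> p (s i) (Tg c) (hatJ c i) (chkJ c i) (pot c i)" using G(13) iM by blast
  have pos: "\<forall>x\<in>hatJ c i. 0 < p x" using G(2) pp by blast
  have m': "minv \<gamma> p (s i) (Tg c) (hatJ c i - ?B) (chkJ c i \<union> ?B) (pot c i)"
  proof -
    have Bs: "?B \<subseteq> hatJ c i" by (rule Collect_restrict)
    show ?thesis using minv_promote[OF mi fin(1)[of i] fin(2)[of i] G(4)[rule_format, of i] Bs pos] .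
  qed
  have H1: "\<And>k. hatJ c1 k = (if k = i then hatJ c i - ?B else hatJ c k)"
    and K1: "\<And>k. chkJ c1 k = (if k = i then chkJ c i \<union> ?B else chkJ c k)"
    and O1: "Tg c1 = Tg c" "pot c1 = pot c" "queue c1 = queue c" "mode c1 = mode c" "pending c1 = pending c"
    unfolding fit_assign(5) promote_sel by simp_all
  have jS: "j \<in> set js" "\<forall>k. j \<notin> hatJ c k \<union> chkJ c k" "j \<notin> queue c"
    using G(12) fit_assign(2) by blast+
  have pj: "0 < p j" using pp jS by blast
  have el: "p j \<le> (1/\<gamma>) * Tg c * s i"
    using fit_assign(3) si unfolding Mt_def eligible_def by (auto simp: divide_le_eq)
  have ns: "sum p (chkJ c1 i) < Tg c * s i"
    using fit_assign(6) si O1 unfolding saturated_def new_load_def by (auto simp: le_divide_eq)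
  have small: "\<forall>x\<in>hatJ c1 i. p x < \<gamma> * p j" using H1 by (auto simp: mult.commute)
  have TS: "0 < Tg c * s i" using G(1) si by simp
  have hs: "hatJ c1 i = hatJ c i - ?B" "chkJ c1 i = chkJ c i \<union> ?B" using H1 K1 by simp_all
  have finc1: "finite (hatJ c1 i)" "finite (chkJ c1 i)" using hs fin by auto
  have djc1: "hatJ c1 i \<inter> chkJ c1 i = {}" using hs G(4) by auto
  have jnc1: "j \<notin> hatJ c1 i \<union> chkJ c1 i" using hs jS by auto
  have posc1: "\<forall>x\<in>hatJ c1 i. 0 < p x" using hs pos by auto
  have mnew: "minv \<gamma> p (s i) (Tg c) (hatJ c1 i - R) (chkJ c1 i \<union> {j}) \<pi>"
    using minv_assign[OF m'[folded hs] finc1 djc1 jnc1 pj el ns small posc1 fit_assign(7,8,9)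
        fit_assign(10)[unfolded O1] ga TS] .
  have RH: "R \<subseteq> hatJ c1 i"
    using greedy_basic[of xs p "\<gamma> * p j + pot c1 i"] fit_assign(7,8,10) by auto
  have RH2: "R \<subseteq> hatJ c i" using RH hs by auto
  have H: "\<And>k. hatJ c' k = (if k = i then hatJ c i - ?B - R else hatJ c k)"
    and K: "\<And>k. chkJ c' k = (if k = i then chkJ c i \<union> ?B \<union> {j} else chkJ c k)"
    and O: "Tg c' = Tg c" "pot c' = (pot c)(i := \<pi>)" "queue c' = queue c \<union> R" "mode c' = Idle"
      "pending c' = pending c"
    unfolding fit_assign(1) using H1 K1 O1 by simp_all
  have U: "\<And>k. hatJ c' k \<union> chkJ c' k = (if k = i then (hatJ c i \<union> chkJ c i - R) \<union> {j} else hatJ c k \<union> chkJ c k)"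
    unfolding H K using RH hs(1) G(4) by auto
  show ?thesis
  proof (rule ginvI)
    show "0 < Tg c'" using G(1) O by simp
    show "\<forall>k. hatJ c' k \<subseteq> set js" using G(2) H by auto
    show "\<forall>k. chkJ c' k \<subseteq> set js" using G(2,3) K jS by auto
    show "\<forall>k. hatJ c' k \<inter> chkJ c' k = {}" using G(4) H K jS by auto
    show "\<forall>k. queue c' \<inter> (hatJ c' k \<union> chkJ c' k) = {}"
    proof
      fix k
      show "queue c' \<inter> (hatJ c' k \<union> chkJ c' k) = {}"
      proof (cases "k = i")
        case True
        then show ?thesis unfolding U O using G(5) jS RH2 by auto
      next
        case False
        have "R \<inter> (hatJ c k \<union> chkJ c k) = {}" using G(7) RH2 False by blast
        then show ?thesis unfolding U O using G(5) False by auto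
      qed
    qed
    show "\<forall>k. set (pending c') \<inter> (hatJ c' k \<union> chkJ c' k) = {}" unfolding U O using G(6) jS G(12) fit_assign(2)
      by auto
    show "\<forall>k k2. k \<noteq> k2 \<longrightarrow> (hatJ c' k \<union> chkJ c' k) \<inter> (hatJ c' k2 \<union> chkJ c' k2) = {}"
      unfolding U using G(7) jS by auto
    show "queue c' \<subseteq> set js" unfolding O using G(8) G(2) RH2 by auto
    show "set (pending c') \<subseteq> set js" "distinct (pending c')" unfolding O using G(9,10) by auto
    show "set (pending c') \<inter> queue c' = {}" unfolding O using G(11) G(6) RH2 by auto
    show "\<forall>j. mode c' = Search j \<longrightarrow> j \<in> set js \<and> j \<notin> queue c' \<and> j \<notin> set (pending c') \<and>
       (\<forall>k. j \<notin> hatJ c' k \<union> chkJ c' k)" unfolding O by simp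
    show "\<forall>k\<in>{1..m}. minv \<gamma> p (s k) (Tg c') (hatJ c' k) (chkJ c' k) (pot c' k)"
    proof
      fix k assume k: "k \<in> {1..m}"
      show "minv \<gamma> p (s k) (Tg c') (hatJ c' k) (chkJ c' k) (pot c' k)"
      proof (cases "k = i")
        case True
        have "hatJ c' k = hatJ c1 i - R" "chkJ c' k = chkJ c1 i \<union> {j}" "pot c' k = \<pi>"
          using True H K O hs by auto
        then show ?thesis using mnew O True by simp
      next
        case False
        then show ?thesis using G(13) k H K O by auto
      qed
    qed
  qed
qed

theorem lemma8:
  fixes m :: nat and s p :: "nat \<Rightarrow> real" and \<gamma> :: real and js :: "nat list" and c :: cfg
  assumes "0 < \<gamma>" and "\<gamma> < 1"
    and "1 \<le> m"
    and "\<forall>i\<in>{1..m}. 0 < s i"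
    and "\<forall>i j. 1 \<le> i \<longrightarrow> i \<le> j \<longrightarrow> j \<le> m \<longrightarrow> s j \<le> s i"
    and "distinct js" and "\<forall>j\<in>set js. 0 < p j"
    and "reachable m s p \<gamma> js c"
  shows "\<forall>i\<in>{1..m}. load s p c i \<le> (1 + 1/\<gamma>) * Tg c"
proof -
  have ne: "js \<noteq> []" and rt: "(step m s p \<gamma>)\<^sup>*\<^sup>* (init_cfg s p (hd js) (tl js)) c"
    using assms(8) unfolding reachable_def by auto
  have I0: "ginv m s p \<gamma> js (init_cfg s p (hd js) (tl js))"
    using ginv_init[OF assms(1,2,3,4,6,7) ne] .
  have I: "ginv m s p \<gamma> js c"
    using rt
  proof (induction rule: rtranclp_induct)
    case base
    then show ?case using I0 .
  next
    case (step y z)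
    then show ?case using ginv_step[OF assms(1,2,4,7)] by blast
  qed
  show ?thesis
  proof
    fix i assume i: "i \<in> {1..m}"
    have si: "0 < s i" using assms(4) i by blast
    have mi: "minv \<gamma> p (s i) (Tg c) (hatJ c i) (chkJ c i) (pot c i)" using ginvD13[OF I] i by blast
    have W: "sum p (hatJ c i) + sum p (chkJ c i) \<le> (1 + 1/\<gamma>) * Tg c * s i" using minv_W[OF mi] .
    have f1: "finite (hatJ c i)" using ginvD2[OF I] by (meson finite_set finite_subset)
    have f2: "finite (chkJ c i)" using ginvD3[OF I] by (meson finite_set finite_subset)
    have dj: "hatJ c i \<inter> chkJ c i = {}" using ginvD4[OF I] by blast
    have e: "sum p (hatJ c i \<union> chkJ c i) = sum p (hatJ c i) + sum p (chkJ c i)"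
      using f1 f2 dj by (simp add: sum.union_disjoint)
    have "sum p (hatJ c i \<union> chkJ c i) / s i \<le> (1 + 1/\<gamma>) * Tg c"
      using W e si by (simp add: divide_le_eq)
    then show "load s p c i \<le> (1 + 1/\<gamma>) * Tg c" unfolding load_def .
  qed
qed

end
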